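(* Let $s=6r+i$ with $r\ge1$ and $i\in\{0,\dots,5\}$. Among all polyiamonds with site-perimeter $s$, the maximal area is attained by the quasi-regular hexagon $E_{B_i}(r)$ (with $E_{B_0}(r)=E(r)$), and every polyiamond with site-perimeter $s$ attaining this maximal area is a quasi-regular hexagon (an image of $E_{B_i}(r)$ under a symmetry of $\mathbb T^2$).
   Context: Faces are the closed triangular faces of the triangular lattice $\mathbb T^2$ in $\mathbb R^2$. A polyiamond $P$ is a finite nonempty union of faces that is connected through shared edges (two faces sharing only a vertex are not adjacent); faces not in $P$ are empty faces. Its area $\|P\|$ is the number of its faces; its edge-perimeter $p(P)$ is the number of edges of $\mathbb T^2$ separating a face of $P$ from an empty face; its site-perimeter $s(P)$ is the number of empty faces sharing at least one edge with a face of $P$. For integers $d\ge1$, $a,b,c\ge0$ with $a+b,b+c,c+a\le d$, $T^d_{a,b,c}$ is the polyiamond obtained from an equilateral triangle of side length $d$ with sides on lattice lines (the union of its $d^2$ faces) by removing the equilateral sub-triangles of side lengths $a,b,c$ at its three corners; its boundary is a (possibly degenerate) hexagon with side lengths, in cyclic order, $a,\ d-a-b,\ b,\ d-b-c,\ c,\ d-c-a$, its area is $d^2-a^2-b^2-c^2$ and its edge- and site-perimeter equal $3d-a-b-c$. Quasi-regular hexagons: for $r\ge1$ let $E(r)=T^{3r}_{r,r,r}$ (regular hexagon of side $r$), $E_{B_1}(r)=T^{3r}_{r-1,r,r}$, $E_{B_2}(r)=T^{3r+1}_{r,r,r+1}$, $E_{B_3}(r)=T^{3r+1}_{r,r,r}$,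 $E_{B_4}(r)=T^{3r+2}_{r,r+1,r+1}$, $E_{B_5}(r)=T^{3r+2}_{r,r,r+1}$. Their areas are $6r^2,\ 6r^2+2r-1,\ 6r^2+4r,\ 6r^2+6r+1,\ 6r^2+8r+2,\ 6r^2+10r+3$, and their edge-perimeters (equal to their site-perimeters) are $6r,6r+1,\dots,6r+5$. A quasi-regular hexagon is any image of one of these under a symmetry (translation, rotation, reflection) of $\mathbb T^2$; $\mathcal Q$ denotes the set of all quasi-regular hexagons. *)

theory Defs
  imports Main
begin

text \<open>Vertices of the triangular lattice are written in the lattice basis
  e1 = (1,0), e2 = (1/2, sqrt 3/2): the pair (a,b) denotes the point a e1 + b e2.\<close>

type_synonym vertex = "int \<times> int"
type_synonym face = "vertex set"

definition face_up :: "int \<Rightarrow> int \<Rightarrow> face" where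
  "face_up x y = {(x,y), (x+1,y), (x,y+1)}"

definition face_down :: "int \<Rightarrow> int \<Rightarrow> face" where
  "face_down x y = {(x+1,y), (x,y+1), (x+1,y+1)}"

definition faces :: "face set" where
  "faces = range (case_prod face_up) \<union> range (case_prod face_down)"

definition adjacent :: "face \<Rightarrow> face \<Rightarrow> bool" where
  "adjacent F G \<longleftrightarrow> F \<in> faces \<and> G \<in> faces \<and> F \<noteq> G \<and> card (F \<inter> G) = 2"

definition polyiamond :: "face set \<Rightarrow> bool" where
  "polyiamond P \<longleftrightarrow> P \<subseteq> faces \<and> finite P \<and> P \<noteq> {} \<and>
     (\<forall>F\<in>P. \<forall>G\<in>P. (\<lambda>A B. A \<in> P \<and> B \<in> P \<and> adjacent A B)\<^sup>*\<^sup>* F G)"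

definition area :: "face set \<Rightarrow> nat" where
  "area P = card P"

definition site_perimeter :: "face set \<Rightarrow> nat" where
  "site_perimeter P = card {G \<in> faces. G \<notin> P \<and> (\<exists>F\<in>P. adjacent F G)}"

text \<open>Squared Euclidean distance between lattice points (in the lattice basis).\<close>
definition dist2 :: "vertex \<Rightarrow> vertex \<Rightarrow> int" where
  "dist2 p q = (let a = fst p - fst q; b = snd p - snd q in a*a + a*b + b*b)"

text \<open>Symmetries of the triangular lattice: bijections of the vertex set preserving
  Euclidean distance (these are exactly restrictions of the plane isometries
  mapping the lattice onto itself: translations, rotations, reflections).\<close>
definition lattice_sym :: "(vertex \<Rightarrow> vertex) \<Rightarrow> bool" where
  "lattice_sym f \<longleftrightarrow> bij f \<and> (\<forall>p q. dist2 (f p) (f q) = dist2 p q)"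

definition sym_image :: "(vertex \<Rightarrow> vertex) \<Rightarrow> face set \<Rightarrow> face set" where
  "sym_image f P = (\<lambda>F. f ` F) ` P"

text \<open>T^d_{a,b,c}: big triangle with corners V0=(0,0), V1=(d,0), V2=(0,d), with
  corner triangles of sides a (at V0), b (at V1), c (at V2) removed.\<close>
definition T :: "nat \<Rightarrow> nat \<Rightarrow> nat \<Rightarrow> nat \<Rightarrow> face set" where
  "T d a b c = {F \<in> faces. \<forall>(x,y)\<in>F. 0 \<le> x \<and> 0 \<le> y \<and> x + y \<le> int d \<and>
       int a \<le> x + y \<and> x \<le> int d - int b \<and> y \<le> int d - int c}"

definition EB :: "nat \<Rightarrow> nat \<Rightarrow> face set" where
  "EB i r = (if i = 0 then T (3*r) r r r
     else if i = 1 then T (3*r) (r-1) r r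
     else if i = 2 then T (3*r+1) r r (r+1)
     else if i = 3 then T (3*r+1) r r r
     else if i = 4 then T (3*r+2) r (r+1) (r+1)
     else T (3*r+2) r r (r+1))"

definition quasi_regular_hexagons :: "face set set" where
  "quasi_regular_hexagons = {sym_image f (EB i r) | f i r. lattice_sym f \<and> i < 6 \<and> r \<ge> 1}"

end

theory Submission
  imports Defs
begin


type_synonym tri = "int \<times> int \<times> bool"

definition enc :: "tri \<Rightarrow> face" where
  "enc u = (case u of (x,y,t) \<Rightarrow> if t then face_down x y else face_up x y)"

lemma mem_enc: "v \<in> enc (x,y,t) \<longleftrightarrow>
   x \<le> fst v \<and> fst v \<le> x+1 \<and> y \<le> snd v \<and> snd v \<le> y+1 \<and>
   x+y+of_bool t \<le> fst v + snd v \<and> fst v + snd v \<le> x+y+of_bool t+1"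
  by (cases v) (auto simp: enc_def face_up_def face_down_def)

lemma inj_enc: "inj enc"
proof (rule injI)
  fix u v assume e: "enc u = enc v"
  obtain x y t where u: "u = (x,y,t)" by (cases u) auto
  obtain x' y' t' where v: "v = (x',y',t')" by (cases v) auto
  have m: "\<And>p. p \<in> enc (x,y,t) \<longleftrightarrow> p \<in> enc (x',y',t')" using e u v by auto
  have 1: "x' \<le> x \<and> y' \<le> y" using m[of "(x,y+1)"] m[of "(x+1,y)"] by (simp add: mem_enc)
  have 2: "x \<le> x' \<and> y \<le> y'" using m[of "(x',y'+1)"] m[of "(x'+1,y')"] by (simp add: mem_enc)
  have 3: "t = t'" using m[of "(x,y)"] m[of "(x+1,y+1)"] 1 2 by (cases t; cases t'; simp add: mem_enc)
  show "u = v" using 1 2 3 u v by auto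
qed

lemma faces_enc: "faces = range enc"
  unfolding faces_def enc_def
  by (auto simp: image_def)

definition adjT :: "tri \<Rightarrow> tri \<Rightarrow> bool" where
  "adjT u v = (case u of (x,y,t) \<Rightarrow> case v of (x',y',t') \<Rightarrow>
     t \<noteq> t' \<and> (if t then (x' = x \<and> y' = y) \<or> (x' = x+1 \<and> y' = y) \<or> (x' = x \<and> y' = y+1)
                  else (x' = x \<and> y' = y) \<or> (x' = x-1 \<and> y' = y) \<or> (x' = x \<and> y' = y-1)))"

lemma adjT_sym: "adjT u v \<Longrightarrow> adjT v u"
  by (cases u; cases v) (auto simp: adjT_def split: if_splits)

lemma card_int_adj:
  assumes "adjT u v" shows "card (enc u \<inter> enc v) = 2"
proof -
  obtain x y t where u: "u = (x,y,t)" by (cases u) auto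
  obtain x' y' t' where v: "v = (x',y',t')" by (cases v) auto
  have "\<exists>p q. p \<noteq> q \<and> enc u \<inter> enc v = {p,q}"
  proof (cases t)
    case True
    then have t': "\<not> t'" using assms u v by (auto simp: adjT_def)
    consider "x' = x \<and> y' = y" | "x' = x+1 \<and> y' = y" | "x' = x \<and> y' = y+1"
      using assms u v True by (auto simp: adjT_def)
    then show ?thesis
    proof cases
      case 1 show ?thesis apply (rule exI[of _ "(x+1,y)"], rule exI[of _ "(x,y+1)"])
        using 1 True t' u v by (auto simp: set_eq_iff mem_enc)
    next
      case 2 show ?thesis apply (rule exI[of _ "(x+1,y)"], rule exI[of _ "(x+1,y+1)"])
        using 2 True t' u v by (auto simp: set_eq_iff mem_enc)
    next
      case 3 show ?thesis apply (rule exI[of _ "(x,y+1)"], rule exI[of _ "(x+1,y+1)"])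
        using 3 True t' u v by (auto simp: set_eq_iff mem_enc)
    qed
  next
    case False
    then have t': "t'" using assms u v by (auto simp: adjT_def)
    consider "x' = x \<and> y' = y" | "x' = x-1 \<and> y' = y" | "x' = x \<and> y' = y-1"
      using assms u v False by (auto simp: adjT_def)
    then show ?thesis
    proof cases
      case 1 show ?thesis apply (rule exI[of _ "(x+1,y)"], rule exI[of _ "(x,y+1)"])
        using 1 False t' u v by (auto simp: set_eq_iff mem_enc)
    next
      case 2 show ?thesis apply (rule exI[of _ "(x,y)"], rule exI[of _ "(x,y+1)"])
        using 2 False t' u v by (auto simp: set_eq_iff mem_enc)
    next
      case 3 show ?thesis apply (rule exI[of _ "(x,y)"], rule exI[of _ "(x+1,y)"])
        using 3 False t' u v by (auto simp: set_eq_iff mem_enc)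
    qed
  qed
  then show ?thesis by (auto simp: card_2_iff)
qed

lemma adj_of_card:
  assumes "card (enc u \<inter> enc v) = 2" "u \<noteq> v" shows "adjT u v"
proof -
  obtain x y t where u: "u = (x,y,t)" by (cases u) auto
  obtain x' y' t' where v: "v = (x',y',t')" by (cases v) auto
  obtain p q where pq: "p \<noteq> q" "enc u \<inter> enc v = {p,q}" using assms(1) by (auto simp: card_2_iff)
  obtain p1 p2 where p: "p = (p1,p2)" by (cases p)
  obtain q1 q2 where q: "q = (q1,q2)" by (cases q)
  have "p \<in> enc u" "p \<in> enc v" "q \<in> enc u" "q \<in> enc v" using pq by auto
  then show ?thesis using u v p q pq(1) assms(2)
    by (cases t; cases t'; simp add: mem_enc adjT_def; smt (verit))
qed

lemma adjacent_enc: "adjacent (enc u) (enc v) \<longleftrightarrow> adjT u v"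
proof
  assume "adjacent (enc u) (enc v)"
  then have "card (enc u \<inter> enc v) = 2" "u \<noteq> v" by (auto simp: adjacent_def)
  then show "adjT u v" by (rule adj_of_card)
next
  assume a: "adjT u v"
  have "u \<noteq> v" using a by (cases u; cases v; auto simp: adjT_def)
  then have "enc u \<noteq> enc v" using inj_enc by (auto dest: injD)
  then show "adjacent (enc u) (enc v)" using card_int_adj[OF a] by (auto simp: adjacent_def faces_enc)
qed


definition RT :: "tri set \<Rightarrow> tri \<Rightarrow> tri \<Rightarrow> bool" where
  "RT Q = (\<lambda>a b. a \<in> Q \<and> b \<in> Q \<and> adjT a b)"

definition connT :: "tri set \<Rightarrow> bool" where
  "connT Q \<longleftrightarrow> (\<forall>u\<in>Q. \<forall>v\<in>Q. (RT Q)\<^sup>*\<^sup>* u v)"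

definition NT :: "tri set \<Rightarrow> tri set" where
  "NT Q = {v. v \<notin> Q \<and> (\<exists>u\<in>Q. adjT u v)}"

lemma enc_eq_iff[simp]: "enc u = enc v \<longleftrightarrow> u = v"
  using inj_enc by (auto dest: injD)

lemma enc_in_image[simp]: "enc u \<in> enc ` Q \<longleftrightarrow> u \<in> Q"
  using inj_enc by (auto dest: injD)

lemma rt_to_face:
  assumes "(RT Q)\<^sup>*\<^sup>* u v"
  shows "(\<lambda>A B. A \<in> enc ` Q \<and> B \<in> enc ` Q \<and> adjacent A B)\<^sup>*\<^sup>* (enc u) (enc v)"
  using assms
proof (induction rule: rtranclp_induct)
  case base then show ?case by simp
next
  case (step y z)
  then show ?case by (auto simp: RT_def adjacent_enc intro: rtranclp.rtrancl_into_rtrancl)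
qed

lemma face_to_rt:
  assumes "(\<lambda>A B. A \<in> enc ` Q \<and> B \<in> enc ` Q \<and> adjacent A B)\<^sup>*\<^sup>* F G" "F = enc u"
  shows "\<forall>v. G = enc v \<longrightarrow> (RT Q)\<^sup>*\<^sup>* u v"
  using assms
proof (induction rule: rtranclp_induct)
  case base then show ?case by simp
next
  case (step y z)
  then obtain v' where v': "y = enc v'" "v' \<in> Q" by auto
  then have "(RT Q)\<^sup>*\<^sup>* u v'" using step by auto
  then show ?case using step v' by (auto simp: RT_def adjacent_enc intro: rtranclp.rtrancl_into_rtrancl)
qed

lemma polyiamond_enc_iff:
  "polyiamond (enc ` Q) \<longleftrightarrow> finite Q \<and> Q \<noteq> {} \<and> connT Q"
proof
  assume p: "polyiamond (enc ` Q)"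
  have "finite Q" using p finite_imageD[of enc Q] inj_enc
    by (auto simp: polyiamond_def inj_on_def)
  moreover have "connT Q" unfolding connT_def
  proof (intro ballI)
    fix u v assume "u \<in> Q" "v \<in> Q"
    then have "(\<lambda>A B. A \<in> enc ` Q \<and> B \<in> enc ` Q \<and> adjacent A B)\<^sup>*\<^sup>* (enc u) (enc v)"
      using p by (auto simp: polyiamond_def)
    then show "(RT Q)\<^sup>*\<^sup>* u v" using face_to_rt by blast
  qed
  ultimately show "finite Q \<and> Q \<noteq> {} \<and> connT Q" using p by (auto simp: polyiamond_def)
next
  assume "finite Q \<and> Q \<noteq> {} \<and> connT Q"
  then show "polyiamond (enc ` Q)"
    by (auto simp: polyiamond_def faces_enc connT_def intro: rt_to_face)
qed

lemma polyiamond_as_enc: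
  assumes "polyiamond P" shows "\<exists>Q. P = enc ` Q \<and> finite Q \<and> Q \<noteq> {} \<and> connT Q"
proof -
  have "P \<subseteq> range enc" using assms by (auto simp: polyiamond_def faces_enc)
  then have "P = enc ` (enc -` P)" by auto
  then show ?thesis using assms polyiamond_enc_iff by metis
qed

lemma area_enc: "area (enc ` Q) = card Q"
  using inj_enc by (simp add: area_def card_image inj_on_def)

lemma site_enc: "site_perimeter (enc ` Q) = card (NT Q)"
proof -
  have "{G \<in> faces. G \<notin> enc ` Q \<and> (\<exists>F\<in>enc ` Q. adjacent F G)} = enc ` NT Q"
    by (auto simp: faces_enc NT_def adjacent_enc)
  then show ?thesis using inj_enc by (simp add: site_perimeter_def card_image inj_on_def)
qed


definition kx :: "tri \<Rightarrow> int" where "kx u = fst u"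
definition ky :: "tri \<Rightarrow> int" where "ky u = fst (snd u)"
definition kz :: "tri \<Rightarrow> int" where "kz u = fst u + fst (snd u) + of_bool (snd (snd u))"
definition px :: "tri \<Rightarrow> int" where "px u = 2 * fst (snd u) + of_bool (snd (snd u))"
definition py :: "tri \<Rightarrow> int" where "py u = 2 * fst u + of_bool (snd (snd u))"

definition fx :: "int \<Rightarrow> int \<Rightarrow> tri" where "fx m p = (m, p div 2, odd p)"
definition fy :: "int \<Rightarrow> int \<Rightarrow> tri" where "fy m p = (p div 2, m, odd p)"
definition fz :: "int \<Rightarrow> int \<Rightarrow> tri" where "fz m p = (p div 2, m - p div 2 - of_bool (odd p), odd p)"

lemma fx_k[simp]: "kx (fx m p) = m" "px (fx m p) = p"
  by (auto simp: fx_def kx_def px_def)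
lemma fy_k[simp]: "ky (fy m p) = m" "py (fy m p) = p"
  by (auto simp: fy_def ky_def py_def)
lemma fz_k[simp]: "kz (fz m p) = m" "py (fz m p) = p"
  by (auto simp: fz_def kz_def py_def)

lemma fx_inv: "fx (kx u) (px u) = u"
  by (cases u) (auto simp: fx_def kx_def px_def)
lemma fy_inv: "fy (ky u) (py u) = u"
  by (cases u) (auto simp: fy_def ky_def py_def)
lemma fz_inv: "fz (kz u) (py u) = u"
  by (cases u) (auto simp: fz_def kz_def py_def)

lemma adj_fx: "adjT u (fx (kx u) (px u - 1))"
  by (cases u) (auto simp: fx_def kx_def px_def adjT_def)
lemma adj_fy: "adjT u (fy (ky u) (py u + 1))"
  by (cases u) (auto simp: fy_def ky_def py_def adjT_def)
lemma adj_fz: "adjT u (fz (kz u) (py u - 1))"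
  by (cases u) (auto simp: fz_def kz_def py_def adjT_def)

definition lox :: "tri set \<Rightarrow> int \<Rightarrow> int" where "lox Q m = Min (px ` {u\<in>Q. kx u = m})"
definition hiy :: "tri set \<Rightarrow> int \<Rightarrow> int" where "hiy Q m = Max (py ` {u\<in>Q. ky u = m})"
definition loz :: "tri set \<Rightarrow> int \<Rightarrow> int" where "loz Q m = Min (py ` {u\<in>Q. kz u = m})"
definition ex :: "tri set \<Rightarrow> int \<Rightarrow> tri" where "ex Q m = fx m (lox Q m - 1)"
definition ey :: "tri set \<Rightarrow> int \<Rightarrow> tri" where "ey Q m = fy m (hiy Q m + 1)"
definition ez :: "tri set \<Rightarrow> int \<Rightarrow> tri" where "ez Q m = fz m (loz Q m - 1)"

lemma lox_facts:
  assumes "finite Q" "m \<in> kx ` Q"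
  shows "fx m (lox Q m) \<in> Q" "\<And>u. u \<in> Q \<Longrightarrow> kx u = m \<Longrightarrow> lox Q m \<le> px u"
proof -
  have f: "finite (px ` {u\<in>Q. kx u = m})" "px ` {u\<in>Q. kx u = m} \<noteq> {}" using assms by auto
  obtain u0 where "u0 \<in> Q" "kx u0 = m" "px u0 = lox Q m"
    using Min_in[OF f] unfolding lox_def by auto
  then show "fx m (lox Q m) \<in> Q" using fx_inv[of u0] by simp
  show "\<And>u. u \<in> Q \<Longrightarrow> kx u = m \<Longrightarrow> lox Q m \<le> px u"
    unfolding lox_def using f by (intro Min_le) auto
qed

lemma hiy_facts:
  assumes "finite Q" "m \<in> ky ` Q"
  shows "fy m (hiy Q m) \<in> Q" "\<And>u. u \<in> Q \<Longrightarrow> ky u = m \<Longrightarrow> py u \<le> hiy Q m"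
proof -
  have f: "finite (py ` {u\<in>Q. ky u = m})" "py ` {u\<in>Q. ky u = m} \<noteq> {}" using assms by auto
  obtain u0 where "u0 \<in> Q" "ky u0 = m" "py u0 = hiy Q m"
    using Max_in[OF f] unfolding hiy_def by auto
  then show "fy m (hiy Q m) \<in> Q" using fy_inv[of u0] by simp
  show "\<And>u. u \<in> Q \<Longrightarrow> ky u = m \<Longrightarrow> py u \<le> hiy Q m"
    unfolding hiy_def using f by (intro Max_ge) auto
qed

lemma loz_facts:
  assumes "finite Q" "m \<in> kz ` Q"
  shows "fz m (loz Q m) \<in> Q" "\<And>u. u \<in> Q \<Longrightarrow> kz u = m \<Longrightarrow> loz Q m \<le> py u"
proof -
  have f: "finite (py ` {u\<in>Q. kz u = m})" "py ` {u\<in>Q. kz u = m} \<noteq> {}" using assms by auto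
  obtain u0 where "u0 \<in> Q" "kz u0 = m" "py u0 = loz Q m"
    using Min_in[OF f] unfolding loz_def by auto
  then show "fz m (loz Q m) \<in> Q" using fz_inv[of u0] by simp
  show "\<And>u. u \<in> Q \<Longrightarrow> kz u = m \<Longrightarrow> loz Q m \<le> py u"
    unfolding loz_def using f by (intro Min_le) auto
qed

lemma ex_NT: assumes "finite Q" "m \<in> kx ` Q" shows "ex Q m \<in> NT Q"
proof -
  note l = lox_facts[OF assms]
  have a: "adjT (fx m (lox Q m)) (ex Q m)"
    using adj_fx[of "fx m (lox Q m)"] by (simp add: ex_def)
  have "ex Q m \<notin> Q" using l(2)[of "ex Q m"] by (auto simp: ex_def)
  then show ?thesis using a l(1) by (auto simp: NT_def)
qed

lemma ey_NT: assumes "finite Q" "m \<in> ky ` Q" shows "ey Q m \<in> NT Q"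
proof -
  note l = hiy_facts[OF assms]
  have a: "adjT (fy m (hiy Q m)) (ey Q m)"
    using adj_fy[of "fy m (hiy Q m)"] by (simp add: ey_def)
  have "ey Q m \<notin> Q" using l(2)[of "ey Q m"] by (auto simp: ey_def)
  then show ?thesis using a l(1) by (auto simp: NT_def)
qed

lemma ez_NT: assumes "finite Q" "m \<in> kz ` Q" shows "ez Q m \<in> NT Q"
proof -
  note l = loz_facts[OF assms]
  have a: "adjT (fz m (loz Q m)) (ez Q m)"
    using adj_fz[of "fz m (loz Q m)"] by (simp add: ez_def)
  have "ez Q m \<notin> Q" using l(2)[of "ez Q m"] by (auto simp: ez_def)
  then show ?thesis using a l(1) by (auto simp: NT_def)
qed

lemma ex_ey: assumes "finite Q" "m \<in> kx ` Q" "m' \<in> ky ` Q" shows "ex Q m \<noteq> ey Q m'"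
proof
  assume e: "ex Q m = ey Q m'"
  note l1 = lox_facts[OF assms(1,2)] and l2 = hiy_facts[OF assms(1,3)]
  define G where "G = ex Q m"
  obtain x y t where G: "G = (x,y,t)" by (cases G) auto
  have g1: "G = fx m (lox Q m - 1)" "G = fy m' (hiy Q m' + 1)" using e by (auto simp: G_def ex_def ey_def)
  have xm: "x = m" "y = m'" using g1 G by (auto simp: fx_def fy_def)
  have "px G = lox Q m - 1" using g1(1) by simp
  then have lo: "lox Q m = 2*y + of_bool t + 1" using G by (simp add: px_def)
  have "py G = hiy Q m' + 1" using g1(2) by simp
  then have hi: "hiy Q m' = 2*x + of_bool t - 1" using G by (simp add: py_def)
  show False
  proof (cases t)
    case True
    have "fy m' (hiy Q m') = (x,y,False)" using hi True xm by (simp add: fy_def)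
    then show False using l2(1) l1(2)[of "(x,y,False)"] lo xm True by (simp add: kx_def px_def)
  next
    case False
    have "fx m (lox Q m) = (x,y,True)" using lo False xm by (simp add: fx_def)
    then show False using l1(1) l2(2)[of "(x,y,True)"] hi xm False by (simp add: ky_def py_def)
  qed
qed

lemma ex_ez: assumes "finite Q" "m \<in> kx ` Q" "m' \<in> kz ` Q" shows "ex Q m \<noteq> ez Q m'"
proof
  assume e: "ex Q m = ez Q m'"
  note l1 = lox_facts[OF assms(1,2)] and l2 = loz_facts[OF assms(1,3)]
  define G where "G = ex Q m"
  obtain x y t where G: "G = (x,y,t)" by (cases G) auto
  have g1: "G = fx m (lox Q m - 1)" "G = fz m' (loz Q m' - 1)" using e by (auto simp: G_def ex_def ez_def)
  have "kx G = m" unfolding g1(1) by simp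
  have "kz G = m'" unfolding g1(2) by simp
  then have xm: "x = m" "m' = x + y + of_bool t" using G \<open>kx G = m\<close> by (auto simp: kx_def kz_def)
  have "px G = lox Q m - 1" using g1(1) by simp
  then have lo: "lox Q m = 2*y + of_bool t + 1" using G by (simp add: px_def)
  have "py G = loz Q m' - 1" using g1(2) by simp
  then have hi: "loz Q m' = 2*x + of_bool t + 1" using G by (simp add: py_def)
  show False
  proof (cases t)
    case True
    have "fx m (lox Q m) = (x,y+1,False)" using lo True xm by (simp add: fx_def)
    then show False using l1(1) l2(2)[of "(x,y+1,False)"] hi xm True by (simp add: kz_def py_def)
  next
    case False
    have "fz m' (loz Q m') = (x,y-1,True)" using hi False xm by (simp add: fz_def)
    then show False using l2(1) l1(2)[of "(x,y-1,True)"] lo xm False by (simp add: kx_def px_def)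
  qed
qed

lemma ey_ez: assumes "finite Q" "m \<in> ky ` Q" "m' \<in> kz ` Q" shows "ey Q m \<noteq> ez Q m'"
proof
  assume e: "ey Q m = ez Q m'"
  note l1 = hiy_facts[OF assms(1,2)] and l2 = loz_facts[OF assms(1,3)]
  define G where "G = ey Q m"
  obtain x y t where G: "G = (x,y,t)" by (cases G) auto
  have g1: "G = fy m (hiy Q m + 1)" "G = fz m' (loz Q m' - 1)" using e by (auto simp: G_def ey_def ez_def)
  have "ky G = m" unfolding g1(1) by simp
  have "kz G = m'" unfolding g1(2) by simp
  then have xm: "y = m" "m' = x + y + of_bool t" using G \<open>ky G = m\<close> by (auto simp: ky_def kz_def)
  have "py G = hiy Q m + 1" using g1(1) by simp
  then have lo: "hiy Q m = 2*x + of_bool t - 1" using G by (simp add: py_def)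
  have "py G = loz Q m' - 1" using g1(2) by simp
  then have hi: "loz Q m' = 2*x + of_bool t + 1" using G by (simp add: py_def)
  show False
  proof (cases t)
    case True
    have "fz m' (loz Q m') = (x+1,y,False)" using hi True xm by (simp add: fz_def)
    then show False using l2(1) l1(2)[of "(x+1,y,False)"] lo xm True by (simp add: ky_def py_def)
  next
    case False
    have "fy m (hiy Q m) = (x-1,y,True)" using lo False xm by (simp add: fy_def)
    then show False using l1(1) l2(2)[of "(x-1,y,True)"] hi xm False by (simp add: kz_def py_def)
  qed
qed

lemma finite_NT: assumes "finite Q" shows "finite (NT Q)"
proof -
  have "NT Q \<subseteq> (\<Union>u\<in>Q. {v. adjT u v})" by (auto simp: NT_def)
  moreover have "finite {v. adjT u v}" for u
  proof -
    obtain x y t where u: "u = (x,y,t)" by (cases u) auto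
    have "{v. adjT u v} \<subseteq> {(x,y,\<not>t),(x+1,y,\<not>t),(x,y+1,\<not>t),(x-1,y,\<not>t),(x,y-1,\<not>t)}"
      using u by (auto simp: adjT_def split: if_splits)
    then show ?thesis by (rule finite_subset) auto
  qed
  then have "finite (\<Union>u\<in>Q. {v. adjT u v})" using assms by auto
  ultimately show ?thesis by (rule finite_subset)
qed

lemma card_keys_le_NT:
  assumes "finite Q"
  shows "card (kx ` Q) + card (ky ` Q) + card (kz ` Q) \<le> card (NT Q)"
proof -
  have i1: "inj_on (ex Q) (kx ` Q)" by (rule inj_onI) (metis ex_def fx_k(1))
  have i2: "inj_on (ey Q) (ky ` Q)" by (rule inj_onI) (metis ey_def fy_k(1))
  have i3: "inj_on (ez Q) (kz ` Q)" by (rule inj_onI) (metis ez_def fz_k(1))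
  have d1: "ex Q ` kx ` Q \<inter> ey Q ` ky ` Q = {}" using ex_ey[OF assms] by blast
  have d2: "(ex Q ` kx ` Q \<union> ey Q ` ky ` Q) \<inter> ez Q ` kz ` Q = {}" using ex_ez[OF assms] ey_ez[OF assms] by blast
  have fin: "finite (kx ` Q)" "finite (ky ` Q)" "finite (kz ` Q)" using assms by auto
  have "card (ex Q ` kx ` Q \<union> ey Q ` ky ` Q \<union> ez Q ` kz ` Q) =
        card (kx ` Q) + card (ky ` Q) + card (kz ` Q)"
    using d1 d2 fin i1 i2 i3 by (simp add: card_Un_disjoint card_image)
  moreover have "ex Q ` kx ` Q \<union> ey Q ` ky ` Q \<union> ez Q ` kz ` Q \<subseteq> NT Q"
    using ex_NT[OF assms] ey_NT[OF assms] ez_NT[OF assms] by blast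
  ultimately show ?thesis using card_mono[OF finite_NT[OF assms]] by metis
qed

lemma key_interval:
  fixes k :: "tri \<Rightarrow> int"
  assumes step: "\<And>a b. adjT a b \<Longrightarrow> k b \<le> k a + 1"
    and path: "(RT Q)\<^sup>*\<^sup>* u v" and u: "u \<in> Q"
  shows "\<And>n. k u \<le> n \<Longrightarrow> n \<le> k v \<Longrightarrow> n \<in> k ` Q"
  using path
proof (induction rule: rtranclp_induct)
  case base then have "n = k u" by simp
  then show ?case using u by simp
next
  case (step y z)
  show ?case
  proof (cases "n \<le> k y")
    case True then show ?thesis using step by auto
  next
    case False
    then have "n = k z" using step.prems step.hyps(2) assms(1)[of y z] by (auto simp: RT_def)
    then show ?thesis using step.hyps(2) by (auto simp: RT_def)
  qed
qed

lemma keys_interval: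
  fixes k :: "tri \<Rightarrow> int"
  assumes step: "\<And>a b. adjT a b \<Longrightarrow> k b \<le> k a + 1"
    and Q: "finite Q" "Q \<noteq> {}" "connT Q"
  shows "k ` Q = {Min (k ` Q)..Max (k ` Q)}"
proof
  show "k ` Q \<subseteq> {Min (k ` Q)..Max (k ` Q)}" using Q by auto
  show "{Min (k ` Q)..Max (k ` Q)} \<subseteq> k ` Q"
  proof
    fix n assume n: "n \<in> {Min (k ` Q)..Max (k ` Q)}"
    have "Min (k ` Q) \<in> k ` Q" using Q by (intro Min_in) auto
    then obtain u where u: "u \<in> Q" "k u = Min (k ` Q)" by (auto simp del: Min_in)
    have "Max (k ` Q) \<in> k ` Q" using Q by (intro Max_in) auto
    then obtain v where v: "v \<in> Q" "k v = Max (k ` Q)" by (auto simp del: Max_in)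
    have "(RT Q)\<^sup>*\<^sup>* u v" using Q(3) u v by (auto simp: connT_def)
    then show "n \<in> k ` Q" using key_interval[of k Q u v n, OF step] n u v by auto
  qed
qed

lemma kx_step: "adjT a b \<Longrightarrow> kx b \<le> kx a + 1"
  by (cases a; cases b) (auto simp: adjT_def kx_def split: if_splits)
lemma ky_step: "adjT a b \<Longrightarrow> ky b \<le> ky a + 1"
  by (cases a; cases b) (auto simp: adjT_def ky_def split: if_splits)
lemma kz_step: "adjT a b \<Longrightarrow> kz b \<le> kz a + 1"
  by (cases a; cases b) (auto simp: adjT_def kz_def split: if_splits)

definition x0 where "x0 Q = Min (kx ` Q)"
definition x1 where "x1 Q = Max (kx ` Q)"
definition y0 where "y0 Q = Min (ky ` Q)"
definition y1 where "y1 Q = Max (ky ` Q)"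
definition z0 where "z0 Q = Min (kz ` Q)"
definition z1 where "z1 Q = Max (kz ` Q)"

lemma lower_bound:
  assumes Q: "finite Q" "Q \<noteq> {}" "connT Q"
  shows "(x1 Q - x0 Q + 1) + (y1 Q - y0 Q + 1) + (z1 Q - z0 Q + 1) \<le> int (card (NT Q))"
proof -
  have ex: "kx ` Q = {x0 Q..x1 Q}"
    using keys_interval[of kx, OF kx_step Q] by (simp add: x0_def x1_def)
  have ey: "ky ` Q = {y0 Q..y1 Q}"
    using keys_interval[of ky, OF ky_step Q] by (simp add: y0_def y1_def)
  have ez: "kz ` Q = {z0 Q..z1 Q}"
    using keys_interval[of kz, OF kz_step Q] by (simp add: z0_def z1_def)
  have le: "x0 Q \<le> x1 Q" "y0 Q \<le> y1 Q" "z0 Q \<le> z1 Q" using Q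
    by (auto simp: x0_def x1_def y0_def y1_def z0_def z1_def)
  have c: "int (card (kx ` Q)) = x1 Q - x0 Q + 1" "int (card (ky ` Q)) = y1 Q - y0 Q + 1"
     "int (card (kz ` Q)) = z1 Q - z0 Q + 1" unfolding ex ey ez using le by auto
  have "int (card (kx ` Q) + card (ky ` Q) + card (kz ` Q)) \<le> int (card (NT Q))"
    using card_keys_le_NT[OF Q(1)] by linarith
  then show ?thesis using c by simp
qed


definition Hreg :: "int \<Rightarrow> int \<Rightarrow> int \<Rightarrow> int \<Rightarrow> int \<Rightarrow> int \<Rightarrow> tri set" where
  "Hreg a0 a1 b0 b1 c0 c1 = {u. a0 \<le> kx u \<and> kx u \<le> a1 \<and> b0 \<le> ky u \<and> ky u \<le> b1 \<and> c0 \<le> kz u \<and> kz u \<le> c1}"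

definition Tri :: "int \<Rightarrow> tri set" where
  "Tri n = {(x,y,t). 0 \<le> x \<and> 0 \<le> y \<and> x + y + of_bool t < n}"

definition Layer :: "int \<Rightarrow> tri set" where
  "Layer n = {(x,y,t). 0 \<le> x \<and> 0 \<le> y \<and> x + y + of_bool t = n}"

lemma Layer_eq: "Layer n = (\<lambda>x. (x, n-x, False)) ` {0..n} \<union> (\<lambda>x. (x, n-1-x, True)) ` {0..n-1}"
  by (auto simp: Layer_def image_def)

lemma card_Layer: assumes "0 \<le> n" shows "int (card (Layer n)) = 2*n+1"
proof -
  have d: "(\<lambda>x. (x, n-x, False)) ` {0..n} \<inter> (\<lambda>x. (x, n-1-x, True)) ` {0..n-1} = {}" by auto
  have "card (Layer n) = card ((\<lambda>x. (x, n-x, False)) ` {0..n}) + card ((\<lambda>x. (x, n-1-x, True)) ` {0..n-1})"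
    unfolding Layer_eq by (rule card_Un_disjoint) (use d in auto)
  also have "\<dots> = card {0..n} + card {0..n-1}"
    by (subst card_image, auto simp: inj_on_def)+
  finally show ?thesis using assms by simp
qed

lemma card_Tri: "int (card (Tri (int n))) = int n * int n"
proof (induction n)
  case 0
  have "Tri 0 = {}" by (auto simp: Tri_def)
  then show ?case by simp
next
  case (Suc n)
  have e: "Tri (int (Suc n)) = Tri (int n) \<union> Layer (int n)"
    by (auto simp: Tri_def Layer_def)
  have d: "Tri (int n) \<inter> Layer (int n) = {}" by (auto simp: Tri_def Layer_def)
  have f1: "finite (Tri (int n))"
  proof -
    have "Tri (int n) \<subseteq> {0..int n} \<times> {0..int n} \<times> UNIV" by (auto simp: Tri_def)
    then show ?thesis by (rule finite_subset) auto
  qed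
  have f2: "finite (Layer (int n))" unfolding Layer_eq by auto
  have "card (Tri (int (Suc n))) = card (Tri (int n)) + card (Layer (int n))"
    unfolding e by (rule card_Un_disjoint[OF f1 f2 d])
  then have "int (card (Tri (int (Suc n)))) = int n * int n + (2 * int n + 1)"
    using Suc card_Layer[of "int n"] by simp
  then show ?case by (simp add: algebra_simps)
qed

lemma card_Tri': "0 \<le> n \<Longrightarrow> int (card (Tri n)) = n * n"
  using card_Tri[of "nat n"] by simp

lemma finite_Tri: "finite (Tri n)"
proof -
  have "Tri n \<subseteq> {0..n} \<times> {0..n} \<times> UNIV" by (auto simp: Tri_def)
  then show ?thesis by (rule finite_subset) auto
qed

definition HT :: "int \<Rightarrow> int \<Rightarrow> int \<Rightarrow> int \<Rightarrow> tri set" where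
  "HT d a b c = Hreg 0 (d-b-1) 0 (d-c-1) a (d-1)"

lemma finite_Hreg: "finite (Hreg a0 a1 b0 b1 c0 c1)"
proof -
  have "Hreg a0 a1 b0 b1 c0 c1 \<subseteq> {a0..a1} \<times> {b0..b1} \<times> UNIV" by (auto simp: Hreg_def kx_def ky_def)
  then show ?thesis by (rule finite_subset) auto
qed

lemma card_HT:
  assumes "0 \<le> a" "0 \<le> b" "0 \<le> c" "a + b \<le> d" "a + c \<le> d" "b + c \<le> d"
  shows "int (card (HT d a b c)) = d*d - a*a - b*b - c*c"
proof -
  define A where "A = d - b"
  define B where "B = d - c"
  define e where "e = d - b - c"
  define R where "R = {0..<A} \<times> {0..<B} \<times> (UNIV :: bool set)"
  define \<iota> where "\<iota> = (\<lambda>(x::int,y::int,t::bool). (A-1-x, B-1-y, \<not>t))"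
  have cR: "int (card R) = A * B * 2" unfolding R_def using assms A_def B_def
    by (simp add: card_cartesian_product)
  have C1: "Tri a \<subseteq> R" using assms by (auto simp: Tri_def R_def A_def B_def)
  have C2: "\<iota> ` Tri e \<subseteq> R" using assms by (auto simp: Tri_def R_def A_def B_def e_def \<iota>_def)
  have dj: "Tri a \<inter> \<iota> ` Tri e = {}" using assms by (auto simp: Tri_def A_def B_def e_def \<iota>_def)
  have ii: "\<iota> (\<iota> u) = u" for u by (cases u) (auto simp: \<iota>_def)
  have im: "u \<in> \<iota> ` S \<longleftrightarrow> \<iota> u \<in> S" for u S by (metis ii image_iff)
  have HTe: "HT d a b c = R - (Tri a \<union> \<iota> ` Tri e)"
    apply (rule set_eqI)
    apply (simp only: Diff_iff Un_iff im)
    by (auto simp: HT_def Hreg_def R_def Tri_def A_def B_def e_def \<iota>_def kx_def ky_def kz_def)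
  have inj: "inj \<iota>" by (auto simp: inj_on_def \<iota>_def)
  have fR: "finite R" unfolding R_def by auto
  have "card (HT d a b c) = card R - card (Tri a \<union> \<iota> ` Tri e)"
    unfolding HTe using C1 C2 fR by (intro card_Diff_subset) (auto intro: finite_subset)
  moreover have "card (Tri a \<union> \<iota> ` Tri e) = card (Tri a) + card (Tri e)"
    using dj finite_Tri card_image[OF inj_on_subset[OF inj subset_UNIV]] by (simp add: card_Un_disjoint)
  moreover have "card (Tri a \<union> \<iota> ` Tri e) \<le> card R" using C1 C2 fR by (intro card_mono) auto
  ultimately have "int (card (HT d a b c)) = int (card R) - int (card (Tri a)) - int (card (Tri e))"
    by simp
  also have "\<dots> = A*B*2 - a*a - e*e" using cR card_Tri' assms e_def by simp
  finally show ?thesis unfolding A_def B_def e_def by (simp add: algebra_simps)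
qed


lemma all_enc_iff:
  "(\<forall>v\<in>enc (x,y,t). P v) \<longleftrightarrow>
    (if t then P (x+1,y) \<and> P (x,y+1) \<and> P (x+1,y+1) else P (x,y) \<and> P (x+1,y) \<and> P (x,y+1))"
  by (auto simp: enc_def face_up_def face_down_def)

lemma T_enc: "T d a b c = enc ` HT (int d) (int a) (int b) (int c)"
proof -
  have "enc u \<in> T d a b c \<longleftrightarrow> u \<in> HT (int d) (int a) (int b) (int c)" for u
  proof -
    obtain x y t where u: "u = (x,y,t)" by (cases u) auto
    show ?thesis unfolding T_def u
      by (cases t) (auto simp: faces_enc all_enc_iff HT_def Hreg_def kx_def ky_def kz_def)
  qed
  moreover have "T d a b c \<subseteq> range enc" by (auto simp: T_def faces_enc)
  ultimately show ?thesis by (auto simp: image_def)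
qed

definition lsym_rot :: "int \<Rightarrow> vertex \<Rightarrow> vertex" where
  "lsym_rot d = (\<lambda>(X,Y). (d - X - Y, X))"
definition lsym_dual :: "int \<Rightarrow> int \<Rightarrow> vertex \<Rightarrow> vertex" where
  "lsym_dual p q = (\<lambda>(X,Y). (p - X, q - Y))"
definition lsym_tr :: "int \<Rightarrow> int \<Rightarrow> vertex \<Rightarrow> vertex" where
  "lsym_tr p q = (\<lambda>(X,Y). (X + p, Y + q))"

definition g_rot :: "int \<Rightarrow> tri \<Rightarrow> tri" where
  "g_rot d = (\<lambda>(x,y,t). (d - x - y - of_bool t - 1, x, t))"
definition g_dual :: "int \<Rightarrow> int \<Rightarrow> tri \<Rightarrow> tri" where
  "g_dual p q = (\<lambda>(x,y,t). (p - 1 - x, q - 1 - y, \<not> t))"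
definition g_tr :: "int \<Rightarrow> int \<Rightarrow> tri \<Rightarrow> tri" where
  "g_tr p q = (\<lambda>(x,y,t). (x + p, y + q, t))"

lemma lattice_sym_rot: "lattice_sym (lsym_rot d)"
proof -
  have "bij (lsym_rot d)"
  proof (rule bij_betw_byWitness[where f' = "\<lambda>(X,Y). (Y, d - X - Y)"])
    show "\<forall>a\<in>UNIV. (\<lambda>(X,Y). (Y, d - X - Y)) (lsym_rot d a) = a" by (auto simp: lsym_rot_def)
    show "\<forall>a'\<in>UNIV. lsym_rot d ((\<lambda>(X,Y). (Y, d - X - Y)) a') = a'" by (auto simp: lsym_rot_def)
  qed auto
  moreover have "dist2 (lsym_rot d p) (lsym_rot d q) = dist2 p q" for p q
    by (cases p; cases q) (simp add: lsym_rot_def dist2_def Let_def algebra_simps)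
  ultimately show ?thesis by (simp add: lattice_sym_def)
qed

lemma lattice_sym_dual: "lattice_sym (lsym_dual p q)"
proof -
  have "bij (lsym_dual p q)"
  proof (rule bij_betw_byWitness[where f' = "lsym_dual p q"])
    show "\<forall>a\<in>UNIV. lsym_dual p q (lsym_dual p q a) = a" by (auto simp: lsym_dual_def)
    show "\<forall>a'\<in>UNIV. lsym_dual p q (lsym_dual p q a') = a'" by (auto simp: lsym_dual_def)
  qed auto
  moreover have "dist2 (lsym_dual p q u) (lsym_dual p q v) = dist2 u v" for u v
    by (cases u; cases v) (simp add: lsym_dual_def dist2_def Let_def algebra_simps)
  ultimately show ?thesis by (simp add: lattice_sym_def)
qed

lemma lattice_sym_tr: "lattice_sym (lsym_tr p q)"
proof -
  have "bij (lsym_tr p q)"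
  proof (rule bij_betw_byWitness[where f' = "lsym_tr (-p) (-q)"])
    show "\<forall>a\<in>UNIV. lsym_tr (-p) (-q) (lsym_tr p q a) = a" by (auto simp: lsym_tr_def)
    show "\<forall>a'\<in>UNIV. lsym_tr p q (lsym_tr (-p) (-q) a') = a'" by (auto simp: lsym_tr_def)
  qed auto
  moreover have "dist2 (lsym_tr p q u) (lsym_tr p q v) = dist2 u v" for u v
    by (cases u; cases v) (simp add: lsym_tr_def dist2_def Let_def algebra_simps)
  ultimately show ?thesis by (simp add: lattice_sym_def)
qed

lemma lattice_sym_comp: assumes "lattice_sym f" "lattice_sym g" shows "lattice_sym (f \<circ> g)"
proof -
  have "bij (f \<circ> g)" using assms by (auto simp: lattice_sym_def intro: bij_comp)
  moreover have "dist2 ((f \<circ> g) p) ((f \<circ> g) q) = dist2 p q" for p q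
    using assms unfolding lattice_sym_def comp_def by metis
  ultimately show ?thesis by (simp add: lattice_sym_def)
qed

lemma sym_image_comp: "sym_image (f \<circ> g) P = sym_image f (sym_image g P)"
  by (auto simp: sym_image_def image_comp)

lemma face_img:
  assumes "\<And>u. f ` enc u = enc (g u)"
  shows "sym_image f (enc ` S) = enc ` (g ` S)"
  using assms by (auto simp: sym_image_def image_comp comp_def)

lemma rot_face: "lsym_rot d ` enc u = enc (g_rot d u)"
proof -
  obtain x y t where u: "u = (x,y,t)" by (cases u) auto
  show ?thesis unfolding u
    by (cases t) (auto simp: lsym_rot_def g_rot_def enc_def face_up_def face_down_def algebra_simps)
qed

lemma dual_face: "lsym_dual p q ` enc u = enc (g_dual p q u)"
proof -
  obtain x y t where u: "u = (x,y,t)" by (cases u) auto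
  show ?thesis unfolding u
    by (cases t) (auto simp: lsym_dual_def g_dual_def enc_def face_up_def face_down_def algebra_simps)
qed

lemma tr_face: "lsym_tr p q ` enc u = enc (g_tr p q u)"
proof -
  obtain x y t where u: "u = (x,y,t)" by (cases u) auto
  show ?thesis unfolding u
    by (cases t) (auto simp: lsym_tr_def g_tr_def enc_def face_up_def face_down_def algebra_simps)
qed


lemma image_by_inv:
  assumes "\<And>u. h (g u) = u" "\<And>v. g (h v) = v"
  shows "g ` A = {v. h v \<in> A}"
  using assms by (auto simp: image_def) (metis)

lemma g_rot_HT: "g_rot d ` HT d a b c = HT d c a b"
proof -
  have "g_rot d ` HT d a b c = {v. (\<lambda>(x,y,t). (y, d - 1 - x - y - of_bool t, t)) v \<in> HT d a b c}"
    by (rule image_by_inv) (auto simp: g_rot_def)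
  also have "\<dots> = HT d c a b"
    by (auto simp: HT_def Hreg_def kx_def ky_def kz_def)
  finally show ?thesis .
qed

lemma g_dual_HT: "g_dual (d-b) (d-c) ` HT d a b c = HT (2*d-a-b-c) (d-b-c) (d-a-c) (d-a-b)"
proof -
  have "g_dual (d-b) (d-c) ` HT d a b c = {v. g_dual (d-b) (d-c) v \<in> HT d a b c}"
    by (rule image_by_inv) (auto simp: g_dual_def)
  also have "\<dots> = HT (2*d-a-b-c) (d-b-c) (d-a-c) (d-a-b)"
    by (auto simp: HT_def Hreg_def kx_def ky_def kz_def g_dual_def)
  finally show ?thesis .
qed

lemma g_tr_HT: "g_tr p q ` HT d a b c = Hreg p (p+d-b-1) q (q+d-c-1) (a+p+q) (d-1+p+q)"
proof -
  have "g_tr p q ` HT d a b c = {v. g_tr (-p) (-q) v \<in> HT d a b c}"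
    by (rule image_by_inv) (auto simp: g_tr_def)
  also have "\<dots> = Hreg p (p+d-b-1) q (q+d-c-1) (a+p+q) (d-1+p+q)"
    by (auto simp: HT_def Hreg_def kx_def ky_def kz_def g_tr_def)
  finally show ?thesis .
qed

definition congr :: "tri set \<Rightarrow> tri set \<Rightarrow> bool" where
  "congr S S' \<longleftrightarrow> (\<exists>f. lattice_sym f \<and> enc ` S' = sym_image f (enc ` S))"

lemma congr_refl: "congr S S"
proof -
  have "lattice_sym (lsym_tr 0 0)" by (rule lattice_sym_tr)
  moreover have "sym_image (lsym_tr 0 0) (enc ` S) = enc ` S"
    by (simp add: face_img[OF tr_face] g_tr_def)
  ultimately show ?thesis unfolding congr_def by metis
qed

lemma congr_trans: "congr S1 S2 \<Longrightarrow> congr S2 S3 \<Longrightarrow> congr S1 S3"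
  unfolding congr_def by (metis lattice_sym_comp sym_image_comp)

lemma congr_rot: "congr (HT d a b c) (HT d c a b)"
  unfolding congr_def
  by (rule exI[of _ "lsym_rot d"]) (simp add: lattice_sym_rot face_img[OF rot_face] g_rot_HT)

lemma congr_dual: "congr (HT d a b c) (HT (2*d-a-b-c) (d-b-c) (d-a-c) (d-a-b))"
  unfolding congr_def
  by (rule exI[of _ "lsym_dual (d-b) (d-c)"]) (simp add: lattice_sym_dual face_img[OF dual_face] g_dual_HT)

lemma congr_tr: "congr (HT d a b c) (Hreg p (p+d-b-1) q (q+d-c-1) (a+p+q) (d-1+p+q))"
  unfolding congr_def
  by (rule exI[of _ "lsym_tr p q"]) (simp add: lattice_sym_tr face_img[OF tr_face] g_tr_HT)


lemma RT_sym: "(RT Q)\<^sup>*\<^sup>* a b \<Longrightarrow> (RT Q)\<^sup>*\<^sup>* b a"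
proof (induction rule: rtranclp_induct)
  case base then show ?case by simp
next
  case (step y z)
  then have "RT Q z y" by (auto simp: RT_def intro: adjT_sym)
  then show ?case using step by (meson converse_rtranclp_into_rtranclp)
qed

lemma HT_conn:
  assumes "0 \<le> a" "0 \<le> b" "0 \<le> c" "a + b \<le> d" "a + c \<le> d" "b + c \<le> d"
    "1 \<le> d - a" "1 \<le> d - b" "1 \<le> d - c"
  shows "connT (HT d a b c)"
proof -
  define H where "H = HT d a b c"
  define root :: tri where "root = (if a = 0 then (0,0,False) else (a-1,0,True))"
  define K where "K = 2*(d-b)+2"
  define M where "M = (\<lambda>u::tri. nat (ky u * K + py u))"
  have memH: "(x,y,t) \<in> H \<longleftrightarrow> 0 \<le> x \<and> x \<le> d-b-1 \<and> 0 \<le> y \<and> y \<le> d-c-1 \<and> a \<le> x+y+of_bool t \<and> x+y+of_bool t \<le> d-1"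
    for x y t by (simp add: H_def HT_def Hreg_def kx_def ky_def kz_def)
  have rootH: "root \<in> H" using assms by (auto simp: root_def memH)
  have RTI: "u \<in> H \<Longrightarrow> v \<in> H \<Longrightarrow> adjT u v \<Longrightarrow> RT H u v" for u v by (simp add: RT_def)
  have main: "\<forall>u\<in>H. M u = n \<longrightarrow> (RT H)\<^sup>*\<^sup>* u root" for n
  proof (induction n rule: less_induct)
    case (less n)
    show ?case
    proof (intro ballI impI)
      fix u assume uH: "u \<in> H" and Mu: "M u = n"
      obtain x y t where u: "u = (x,y,t)" by (cases u) auto
      have IH: "v \<in> H \<Longrightarrow> M v < M u \<Longrightarrow> (RT H)\<^sup>*\<^sup>* v root" for v using less Mu by auto
      have b: "0 \<le> x" "x \<le> d-b-1" "0 \<le> y" "y \<le> d-c-1" "a \<le> x+y+of_bool t" "x+y+of_bool t \<le> d-1"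
        using uH u memH by auto
      have Kp: "K > 2" using K_def assms by simp
      have yK: "0 \<le> y * K" "0 \<le> K * y" using b(3) Kp by simp_all
      have yK2: "0 < y \<Longrightarrow> K \<le> K * y" using Kp by simp
      have Mlt: "0 \<le> ky v \<Longrightarrow> 0 \<le> py v \<Longrightarrow> ky v * K + py v < ky u * K + py u \<Longrightarrow> M v < M u" for v
      proof -
        assume h: "0 \<le> ky v" "0 \<le> py v" "ky v * K + py v < ky u * K + py u"
        have "0 \<le> ky v * K" using h(1) Kp by simp
        then show "M v < M u" using h by (simp add: M_def)
      qed
      show "(RT H)\<^sup>*\<^sup>* u root"
      proof (cases t)
        case False
        show ?thesis
        proof (cases "x > 0")
          case True
          define v where "v = (x-1,y,True)"
          have vH: "v \<in> H" using b False True by (simp add: v_def memH)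
          have "RT H u v" using uH vH u False by (intro RTI) (auto simp: v_def adjT_def)
          moreover have "M v < M u" using b False True u yK by (simp add: M_def v_def ky_def py_def)
          ultimately show ?thesis using IH vH by (meson converse_rtranclp_into_rtranclp)
        next
          case x0: False
          show ?thesis
          proof (cases "y > 0")
            case True
            define v where "v = (x,y-1,True)"
            have vH: "v \<in> H" using b False True x0 by (simp add: v_def memH)
            have "RT H u v" using uH vH u False by (intro RTI) (auto simp: v_def adjT_def)
            moreover have "M v < M u" using b False True x0 u yK Kp yK2 by (intro Mlt) (simp_all add: v_def ky_def py_def algebra_simps)
            ultimately show ?thesis using IH vH by (meson converse_rtranclp_into_rtranclp)
          next
            case y0: False
            have "u = root" using b False x0 y0 u assms(1) by (auto simp: root_def)
            then show ?thesis by simp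
          qed
        qed
      next
        case True
        show ?thesis
        proof (cases "x + y \<ge> a")
          case ge: True
          define v where "v = (x,y,False)"
          have vH: "v \<in> H" using b True ge by (simp add: v_def memH)
          have "RT H u v" using uH vH u True by (intro RTI) (auto simp: v_def adjT_def)
          moreover have "M v < M u" using b True u yK by (simp add: M_def v_def ky_def py_def)
          ultimately show ?thesis using IH vH by (meson converse_rtranclp_into_rtranclp)
        next
          case lt: False
          show ?thesis
          proof (cases "y > 0")
            case ypos: True
            define v1 where "v1 = (x+1,y,False)"
            define v2 where "v2 = (x+1,y-1,True)"
            have v1H: "v1 \<in> H" using b True lt ypos assms by (simp add: v1_def memH)
            have v2H: "v2 \<in> H" using b True lt ypos assms by (simp add: v2_def memH)
            have "RT H u v1" using uH v1H u True by (intro RTI) (auto simp: v1_def adjT_def)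
            moreover have "RT H v1 v2" using v1H v2H by (intro RTI) (auto simp: v1_def v2_def adjT_def)
            moreover have "M v2 < M u" using b True ypos u yK Kp yK2 by (intro Mlt) (simp_all add: v2_def ky_def py_def algebra_simps)
            ultimately show ?thesis using IH[OF v2H] by (meson converse_rtranclp_into_rtranclp)
          next
            case y0: False
            have "u = root" using b True lt y0 u assms(1) by (auto simp: root_def)
            then show ?thesis by simp
          qed
        qed
      qed
    qed
  qed
  have "(RT H)\<^sup>*\<^sup>* u root" if "u \<in> H" for u using main that by blast
  then show ?thesis unfolding connT_def H_def[symmetric]
    by (meson RT_sym rtranclp_trans)
qed


context
  fixes a0 a1 b0 b1 c0 c1 :: int
begin

abbreviation "HH \<equiv> Hreg a0 a1 b0 b1 c0 c1"

lemma memHH: "(x,y,t) \<in> HH \<longleftrightarrow> a0 \<le> x \<and> x \<le> a1 \<and> b0 \<le> y \<and> y \<le> b1 \<and> c0 \<le> x+y+of_bool t \<and> x+y+of_bool t \<le> c1"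
  by (simp add: Hreg_def kx_def ky_def kz_def)

lemma NT_cases:
  assumes "v \<in> NT HH"
  shows "ky v = b0 - 1 \<or> kz v = c0 - 1 \<or> kx v = a1 + 1 \<or> kz v = c1 + 1 \<or> kx v = a0 - 1 \<or> ky v = b1 + 1"
proof -
  obtain u where u: "u \<in> HH" "adjT u v" "v \<notin> HH" using assms by (auto simp: NT_def)
  obtain x y t where uu: "u = (x,y,t)" by (cases u) auto
  obtain x' y' t' where vv: "v = (x',y',t')" by (cases v) auto
  show ?thesis using u uu vv by (auto simp: memHH adjT_def kx_def ky_def kz_def split: if_splits)
qed

lemma NT_X1: assumes "v \<in> NT HH" "ky v = b0 - 1"
  shows "v = (kx v, b0 - 1, True) \<and> (kx v, b0, False) \<in> HH"
proof -
  obtain u where u: "u \<in> HH" "adjT u v" "v \<notin> HH" using assms by (auto simp: NT_def)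
  obtain x y t where uu: "u = (x,y,t)" by (cases u) auto
  obtain x' y' t' where vv: "v = (x',y',t')" by (cases v) auto
  show ?thesis using u uu vv assms(2) by (auto simp: memHH adjT_def kx_def ky_def kz_def split: if_splits)
qed

lemma NT_X2: assumes "v \<in> NT HH" "kz v = c0 - 1"
  shows "v = (kx v, c0 - 1 - kx v, False) \<and> (kx v, c0 - 1 - kx v, True) \<in> HH"
proof -
  obtain u where u: "u \<in> HH" "adjT u v" "v \<notin> HH" using assms by (auto simp: NT_def)
  obtain x y t where uu: "u = (x,y,t)" by (cases u) auto
  obtain x' y' t' where vv: "v = (x',y',t')" by (cases v) auto
  show ?thesis using u uu vv assms(2) by (auto simp: memHH adjT_def kx_def ky_def kz_def split: if_splits)
qed

lemma NT_Y1: assumes "v \<in> NT HH" "kx v = a1 + 1"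
  shows "v = (a1 + 1, ky v, False) \<and> (a1, ky v, True) \<in> HH"
proof -
  obtain u where u: "u \<in> HH" "adjT u v" "v \<notin> HH" using assms by (auto simp: NT_def)
  obtain x y t where uu: "u = (x,y,t)" by (cases u) auto
  obtain x' y' t' where vv: "v = (x',y',t')" by (cases v) auto
  show ?thesis using u uu vv assms(2) by (auto simp: memHH adjT_def kx_def ky_def kz_def split: if_splits)
qed

lemma NT_Y2: assumes "v \<in> NT HH" "kz v = c1 + 1"
  shows "v = (c1 - ky v, ky v, True) \<and> (c1 - ky v, ky v, False) \<in> HH"
proof -
  obtain u where u: "u \<in> HH" "adjT u v" "v \<notin> HH" using assms by (auto simp: NT_def)
  obtain x y t where uu: "u = (x,y,t)" by (cases u) auto
  obtain x' y' t' where vv: "v = (x',y',t')" by (cases v) auto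
  show ?thesis using u uu vv assms(2) by (auto simp: memHH adjT_def kx_def ky_def kz_def split: if_splits)
qed

lemma NT_Z1: assumes "v \<in> NT HH" "kx v = a0 - 1"
  shows "v = (a0 - 1, kz v - a0, True) \<and> (a0, kz v - a0, False) \<in> HH"
proof -
  obtain u where u: "u \<in> HH" "adjT u v" "v \<notin> HH" using assms by (auto simp: NT_def)
  obtain x y t where uu: "u = (x,y,t)" by (cases u) auto
  obtain x' y' t' where vv: "v = (x',y',t')" by (cases v) auto
  show ?thesis using u uu vv assms(2) by (auto simp: memHH adjT_def kx_def ky_def kz_def split: if_splits)
qed

lemma NT_Z2: assumes "v \<in> NT HH" "ky v = b1 + 1"
  shows "v = (kz v - b1 - 1, b1 + 1, False) \<and> (kz v - b1 - 1, b1, True) \<in> HH"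
proof -
  obtain u where u: "u \<in> HH" "adjT u v" "v \<notin> HH" using assms by (auto simp: NT_def)
  obtain x y t where uu: "u = (x,y,t)" by (cases u) auto
  obtain x' y' t' where vv: "v = (x',y',t')" by (cases v) auto
  show ?thesis using u uu vv assms(2) by (auto simp: memHH adjT_def kx_def ky_def kz_def split: if_splits)
qed

lemma card_le_keys:
  fixes k :: "tri \<Rightarrow> int"
  assumes "inj_on k C" "k ` C \<subseteq> {p..q}"
  shows "int (card C) \<le> max 0 (q - p + 1)"
proof -
  have "card C = card (k ` C)" using assms(1) by (simp add: card_image)
  also have "\<dots> \<le> card {p..q}" using assms(2) by (intro card_mono) auto
  finally show ?thesis by simp
qed

lemma CX_inj:
  assumes "v \<in> NT HH" "v' \<in> NT HH" "ky v = b0 - 1 \<or> kz v = c0 - 1" "ky v' = b0 - 1 \<or> kz v' = c0 - 1"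
    "kx v = kx v'"
  shows "v = v'"
proof -
  define x where "x = kx v"
  have A: "ky w = b0 - 1 \<Longrightarrow> w = (x, b0 - 1, True) \<and> x + b0 \<ge> c0" if "w \<in> NT HH" "kx w = x" for w
    using NT_X1[OF that(1)] that memHH by fastforce
  have B: "kz w = c0 - 1 \<Longrightarrow> w = (x, c0 - 1 - x, False) \<and> c0 - 1 - x \<ge> b0" if "w \<in> NT HH" "kx w = x" for w
    using NT_X2[OF that(1)] that memHH by fastforce
  show ?thesis using A[OF assms(1)] A[OF assms(2)] B[OF assms(1)] B[OF assms(2)] assms(3,4,5) x_def by auto
qed

lemma CY_inj:
  assumes "v \<in> NT HH" "v' \<in> NT HH" "kx v = a1 + 1 \<or> kz v = c1 + 1" "kx v' = a1 + 1 \<or> kz v' = c1 + 1"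
    "ky v = ky v'"
  shows "v = v'"
proof -
  define y where "y = ky v"
  have A: "kx w = a1 + 1 \<Longrightarrow> w = (a1 + 1, y, False) \<and> a1 + y + 1 \<le> c1" if "w \<in> NT HH" "ky w = y" for w
    using NT_Y1[OF that(1)] that memHH by fastforce
  have B: "kz w = c1 + 1 \<Longrightarrow> w = (c1 - y, y, True) \<and> c1 - y \<le> a1" if "w \<in> NT HH" "ky w = y" for w
    using NT_Y2[OF that(1)] that memHH by fastforce
  show ?thesis using A[OF assms(1)] A[OF assms(2)] B[OF assms(1)] B[OF assms(2)] assms(3,4,5) y_def by auto
qed

lemma CZ_inj:
  assumes "v \<in> NT HH" "v' \<in> NT HH" "kx v = a0 - 1 \<or> ky v = b1 + 1" "kx v' = a0 - 1 \<or> ky v' = b1 + 1"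
    "kz v = kz v'"
  shows "v = v'"
proof -
  define z where "z = kz v"
  have A: "kx w = a0 - 1 \<Longrightarrow> w = (a0 - 1, z - a0, True) \<and> z - a0 \<le> b1" if "w \<in> NT HH" "kz w = z" for w
    using NT_Z1[OF that(1)] that memHH by fastforce
  have B: "ky w = b1 + 1 \<Longrightarrow> w = (z - b1 - 1, b1 + 1, False) \<and> z - b1 - 1 \<ge> a0" if "w \<in> NT HH" "kz w = z" for w
    using NT_Z2[OF that(1)] that memHH by fastforce
  show ?thesis using A[OF assms(1)] A[OF assms(2)] B[OF assms(1)] B[OF assms(2)] assms(3,4,5) z_def by auto
qed

lemma CX_range: assumes "v \<in> NT HH" "ky v = b0 - 1 \<or> kz v = c0 - 1" shows "a0 \<le> kx v \<and> kx v \<le> a1"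
  using assms NT_X1[OF assms(1)] NT_X2[OF assms(1)] memHH by blast
lemma CY_range: assumes "v \<in> NT HH" "kx v = a1 + 1 \<or> kz v = c1 + 1" shows "b0 \<le> ky v \<and> ky v \<le> b1"
  using assms NT_Y1[OF assms(1)] NT_Y2[OF assms(1)] memHH by blast
lemma CZ_range: assumes "v \<in> NT HH" "kx v = a0 - 1 \<or> ky v = b1 + 1" shows "c0 \<le> kz v \<and> kz v \<le> c1"
proof -
  have "c0 \<le> kz v \<and> kz v \<le> c1" if "kx v = a0 - 1"
    using NT_Z1[OF assms(1) that] memHH by simp
  moreover have "c0 \<le> kz v \<and> kz v \<le> c1" if "ky v = b1 + 1"
    using NT_Z2[OF assms(1) that] memHH by simp
  ultimately show ?thesis using assms(2) by blast
qed

lemma NT_upper: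
  shows "int (card (NT HH)) \<le> max 0 (a1 - a0 + 1) + max 0 (b1 - b0 + 1) + max 0 (c1 - c0 + 1)"
proof -
  define CX where "CX = {v \<in> NT HH. ky v = b0 - 1 \<or> kz v = c0 - 1}"
  define CY where "CY = {v \<in> NT HH. kx v = a1 + 1 \<or> kz v = c1 + 1}"
  define CZ where "CZ = {v \<in> NT HH. kx v = a0 - 1 \<or> ky v = b1 + 1}"
  have fin: "finite (NT HH)" by (rule finite_NT[OF finite_Hreg])
  have sub: "NT HH \<subseteq> CX \<union> CY \<union> CZ" using NT_cases by (auto simp: CX_def CY_def CZ_def)
  have cX: "int (card CX) \<le> max 0 (a1 - a0 + 1)"
  proof (rule card_le_keys[of kx])
    show "inj_on kx CX" unfolding CX_def by (rule inj_onI) (use CX_inj in auto)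
    show "kx ` CX \<subseteq> {a0..a1}" unfolding CX_def using CX_range by auto
  qed
  have cY: "int (card CY) \<le> max 0 (b1 - b0 + 1)"
  proof (rule card_le_keys[of ky])
    show "inj_on ky CY" unfolding CY_def by (rule inj_onI) (use CY_inj in auto)
    show "ky ` CY \<subseteq> {b0..b1}" unfolding CY_def using CY_range by auto
  qed
  have cZ: "int (card CZ) \<le> max 0 (c1 - c0 + 1)"
  proof (rule card_le_keys[of kz])
    show "inj_on kz CZ" unfolding CZ_def by (rule inj_onI) (use CZ_inj in auto)
    show "kz ` CZ \<subseteq> {c0..c1}" unfolding CZ_def using CZ_range by auto
  qed
  have "card (NT HH) \<le> card (CX \<union> CY \<union> CZ)"
    using sub fin by (intro card_mono) (auto simp: CX_def CY_def CZ_def)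
  also have "\<dots> \<le> card CX + card CY + card CZ" by (meson card_Un_le add_le_mono le_trans order_refl)
  finally show ?thesis using cX cY cZ by linarith
qed

end


definition Am :: "nat \<Rightarrow> int \<Rightarrow> int" where
  "Am i r = 6*r*r + 2*int i*r + (if i = 0 then 0 else if i = 1 then -1 else if i = 2 then 0
      else if i = 3 then 1 else if i = 4 then 2 else 3)"

definition Sol :: "nat \<Rightarrow> int \<Rightarrow> int \<Rightarrow> int \<Rightarrow> int \<Rightarrow> int \<Rightarrow> bool" where
  "Sol i r d a b c \<longleftrightarrow>
    (i = 0 \<and> (d,a,b,c) = (3*r, r, r, r)) \<or>
    (i = 1 \<and> ((d,a,b,c) = (3*r, r-1, r, r) \<or> (d,a,b,c) = (3*r, r, r-1, r) \<or> (d,a,b,c) = (3*r, r, r, r-1) \<or>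
              (d,a,b,c) = (3*r+1, r, r+1, r+1) \<or> (d,a,b,c) = (3*r+1, r+1, r, r+1) \<or> (d,a,b,c) = (3*r+1, r+1, r+1, r))) \<or>
    (i = 2 \<and> ((d,a,b,c) = (3*r+1, r, r, r+1) \<or> (d,a,b,c) = (3*r+1, r+1, r, r) \<or> (d,a,b,c) = (3*r+1, r, r+1, r))) \<or>
    (i = 3 \<and> ((d,a,b,c) = (3*r+1, r, r, r) \<or> (d,a,b,c) = (3*r+2, r+1, r+1, r+1))) \<or>
    (i = 4 \<and> ((d,a,b,c) = (3*r+2, r, r+1, r+1) \<or> (d,a,b,c) = (3*r+2, r+1, r, r+1) \<or> (d,a,b,c) = (3*r+2, r+1, r+1, r))) \<or>
    (i = 5 \<and> ((d,a,b,c) = (3*r+2, r, r, r+1) \<or> (d,a,b,c) = (3*r+2, r+1, r, r) \<or> (d,a,b,c) = (3*r+2, r, r+1, r) \<or>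
              (d,a,b,c) = (3*r+3, r+1, r+1, r+2) \<or> (d,a,b,c) = (3*r+3, r+2, r+1, r+1) \<or> (d,a,b,c) = (3*r+3, r+1, r+2, r+1)))"

lemma sq_small: "(x::int) * x \<le> 3 \<Longrightarrow> x = -1 \<or> x = 0 \<or> x = 1"
proof (rule ccontr)
  assume h: "x * x \<le> 3" "\<not> (x = -1 \<or> x = 0 \<or> x = 1)"
  then have "2 \<le> \<bar>x\<bar>" by auto
  then have "2 * 2 \<le> \<bar>x\<bar> * \<bar>x\<bar>" by (intro mult_mono) auto
  then show False using h(1) by (simp add: abs_mult[symmetric])
qed

lemma even_sq_plus: "even ((n::int) * n + n)"
  by (metis even_add even_mult_iff)

lemma solve6: "6*(b::int) = 6*r + K \<Longrightarrow> b = r + K div 6 \<and> K mod 6 = 0"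
  by presburger

lemma gen1: "0 \<le> X \<Longrightarrow> 0 \<le> Y \<Longrightarrow> 0 \<le> Z \<Longrightarrow> 0 \<le> W \<Longrightarrow> 0 \<le> 3*X + 2*(Y+Z+(W::int))" by arith
lemma gen2: "3*X + 2*(Y+Z+W) = D \<Longrightarrow> D \<le> 7 \<Longrightarrow> 0 \<le> X \<Longrightarrow> 0 \<le> Y \<Longrightarrow> 0 \<le> Z \<Longrightarrow> 0 \<le> (W::int)
          \<Longrightarrow> X \<le> 3 \<and> Y \<le> 3 \<and> Z \<le> 3" by arith
lemma gen3: "A - 6*B = Z \<Longrightarrow> 0 \<le> Z \<Longrightarrow> 6*B \<le> (A::int)" by linarith

lemma hex_bound:
  fixes d a b c r :: int and i :: nat
  assumes r: "r \<ge> 1" and i: "i < 6" and w0: "0 \<le> 3*d-a-b-c" and ws: "3*d-a-b-c \<le> 6*r + int i"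
  shows "d*d-a*a-b*b-c*c \<le> Am i r \<and>
         (d*d-a*a-b*b-c*c = Am i r \<longrightarrow> 3*d-a-b-c = 6*r + int i \<and> Sol i r d a b c)"
proof -
  define w where "w = 3*d-a-b-c"
  define ar where "ar = d*d-a*a-b*b-c*c"
  define s where "s = 6*r + int i"
  define u where "u = d-a-b-c"
  define p where "p = a-b"
  define q where "q = b-c"
  define \<delta> where "\<delta> = (if i = 0 then 0 else if i = 1 then 7 else if i = 2 then 4
      else if i = 3 then 3 else if i = 4 then 4 else (7::int))"
  have idQ: "w*w - 6*ar = 3*(u*u) + 2*(p*p + q*q + (p+q)*(p+q))"
    unfolding w_def ar_def u_def p_def q_def by (simp add: algebra_simps)
  have sq: "0 \<le> u*u" "0 \<le> p*p" "0 \<le> q*q" "0 \<le> (p+q)*(p+q)" by simp_all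
  have iv: "i=0 \<or> i=1 \<or> i=2 \<or> i=3 \<or> i=4 \<or> i=5" using i by auto
  have Am6: "6 * Am i r = s*s - \<delta>"
    unfolding Am_def s_def \<delta>_def using iv by (elim disjE) (simp_all add: algebra_simps)
  have dl: "0 \<le> \<delta>" "\<delta> \<le> 7" unfolding \<delta>_def by auto
  have s6: "s \<ge> 6" using r s_def by simp
  have par1: "even (ar + w)"
  proof -
    have "ar + w = (d*d+d) + 2*d - (a*a+a) - (b*b+b) - (c*c+c)" unfolding ar_def w_def by (simp add: algebra_simps)
    then show ?thesis using even_sq_plus[of d] even_sq_plus[of a] even_sq_plus[of b] even_sq_plus[of c]
      by (metis even_add even_diff dvd_triv_left)
  qed
  have par2: "even (Am i r + s)"
  proof -
    have "Am i r + s = 2*(3*r*r + int i*r + 3*r) + (if i = 0 then 0 else if i = 1 then 0 else if i = 2 then 2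
      else if i = 3 then 4 else if i = 4 then 6 else 8)"
      unfolding Am_def s_def using iv by (elim disjE) (simp_all add: algebra_simps)
    then show ?thesis using iv by auto
  qed
  have Zn: "0 \<le> 3*(u*u) + 2*(p*p + q*q + (p+q)*(p+q))" by (rule gen1[OF sq])
  have le1: "6*ar \<le> w*w" by (rule gen3[OF idQ Zn])
  show ?thesis
  proof (cases "w < s")
    case True
    have "w*w \<le> (s-1)*(s-1)" using True w0 w_def by (intro mult_mono) auto
    then have "6*ar \<le> s*s - 2*s + 1" using le1 by (simp add: algebra_simps)
    then have "ar < Am i r" using Am6 dl s6 by linarith
    then show ?thesis unfolding ar_def by simp
  next
    case False
    then have ws': "w = s" using ws w_def s_def by simp
    then have "6*ar \<le> 6*Am i r + \<delta>" using le1 Am6 by simp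
    then have "ar \<le> Am i r + 1" using dl by linarith
    moreover have "ar \<noteq> Am i r + 1" using par1 par2 ws' by (metis even_add odd_one add.commute add.left_commute)
    ultimately have le: "ar \<le> Am i r" by linarith
    have "Sol i r d a b c" if eq: "ar = Am i r"
    proof -
      have Qd: "3*(u*u) + 2*(p*p + q*q + (p+q)*(p+q)) = \<delta>" using idQ eq Am6 ws' by simp
      have "u*u \<le> 3 \<and> p*p \<le> 3 \<and> q*q \<le> 3"
        by (rule gen2[OF Qd dl(2) sq])
      then have "u*u \<le> 3" "p*p \<le> 3" "q*q \<le> 3" by auto
      then have U: "u = -1 \<or> u = 0 \<or> u = 1" and P: "p = -1 \<or> p = 0 \<or> p = 1" and Qq: "q = -1 \<or> q = 0 \<or> q = 1"
        using sq_small by blast+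
      have lin: "3*d-a-b-c = 6*r + int i" using ws' w_def s_def by simp
      have l6: "6*b = 6*r + (int i - 3*u - 2*p + 2*q)" using lin unfolding u_def p_def q_def by arith
      have ac: "a = b + p" "c = b - q" "d = u + 3*b + p - q" unfolding u_def p_def q_def by simp_all
      note bb = solve6[OF l6]
      show ?thesis using U P Qq Qd iv bb unfolding \<delta>_def Sol_def ac
        by (elim disjE; simp)
    qed
    then show ?thesis using le ws' unfolding ar_def w_def s_def by auto
  qed
qed


lemma congr_rot': "d' = d \<Longrightarrow> a' = c \<Longrightarrow> b' = a \<Longrightarrow> c' = b \<Longrightarrow> congr (HT d a b c) (HT d' a' b' c')"
  using congr_rot by simp
lemma congr_dual': "d' = 2*d-a-b-c \<Longrightarrow> a' = d-b-c \<Longrightarrow> b' = d-a-c \<Longrightarrow> c' = d-a-b \<Longrightarrow>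
   congr (HT d a b c) (HT d' a' b' c')"
  using congr_dual by simp

definition ed :: "nat \<Rightarrow> int \<Rightarrow> int" where
  "ed i r = (if i = 0 then 3*r else if i = 1 then 3*r else if i = 2 then 3*r+1 else if i = 3 then 3*r+1 else 3*r+2)"
definition ea :: "nat \<Rightarrow> int \<Rightarrow> int" where
  "ea i r = (if i = 1 then r - 1 else r)"
definition eb :: "nat \<Rightarrow> int \<Rightarrow> int" where
  "eb i r = (if i = 4 then r + 1 else r)"
definition ec :: "nat \<Rightarrow> int \<Rightarrow> int" where
  "ec i r = (if i = 2 \<or> i = 4 \<or> i = 5 then r + 1 else r)"

lemma EB_HT: assumes "(r::nat) \<ge> 1" "i < 6"
  shows "EB i r = enc ` HT (ed i (int r)) (ea i (int r)) (eb i (int r)) (ec i (int r))"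
proof -
  have iv: "i=0 \<or> i=1 \<or> i=2 \<or> i=3 \<or> i=4 \<or> i=5" using assms by auto
  then show ?thesis using assms
    by (elim disjE) (simp_all add: EB_def T_enc ed_def ea_def eb_def ec_def of_nat_diff add.commute)
qed

lemma congr_sol:
  assumes "r \<ge> 1" "Sol i r d a b c"
  shows "congr (HT (ed i r) (ea i r) (eb i r) (ec i r)) (HT d a b c)"
proof -
  let ?B = "HT (ed i r) (ea i r) (eb i r) (ec i r)"
  consider (i0) "i = 0" | (i1) "i = 1" | (i2) "i = 2" | (i3) "i = 3" | (i4) "i = 4" | (i5) "i = 5"
    using assms(2) unfolding Sol_def by auto
  then show ?thesis
  proof cases
    case i0 then show ?thesis using assms(2) congr_refl by (simp add: Sol_def ed_def ea_def eb_def ec_def)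
  next
    case i1
    have B: "?B = HT (3*r) (r-1) r r" using i1 by (simp add: ed_def ea_def eb_def ec_def)
    have c1: "congr ?B (HT (3*r) r (r-1) r)" unfolding B by (rule congr_rot') auto
    have c2: "congr ?B (HT (3*r) r r (r-1))" using c1 by (rule congr_trans) (rule congr_rot', auto)
    have c3: "congr ?B (HT (3*r+1) r (r+1) (r+1))" unfolding B by (rule congr_dual') auto
    have c4: "congr ?B (HT (3*r+1) (r+1) r (r+1))" using c3 by (rule congr_trans) (rule congr_rot', auto)
    have c5: "congr ?B (HT (3*r+1) (r+1) (r+1) r)" using c4 by (rule congr_trans) (rule congr_rot', auto)
    show ?thesis using assms(2) i1 congr_refl[of ?B] c1 c2 c3 c4 c5 B unfolding Sol_def by auto
  next
    case i2
    have B: "?B = HT (3*r+1) r r (r+1)" using i2 by (simp add: ed_def ea_def eb_def ec_def)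
    have c1: "congr ?B (HT (3*r+1) (r+1) r r)" unfolding B by (rule congr_rot') auto
    have c2: "congr ?B (HT (3*r+1) r (r+1) r)" using c1 by (rule congr_trans) (rule congr_rot', auto)
    show ?thesis using assms(2) i2 congr_refl[of ?B] c1 c2 B unfolding Sol_def by auto
  next
    case i3
    have B: "?B = HT (3*r+1) r r r" using i3 by (simp add: ed_def ea_def eb_def ec_def)
    have c1: "congr ?B (HT (3*r+2) (r+1) (r+1) (r+1))" unfolding B by (rule congr_dual') auto
    show ?thesis using assms(2) i3 congr_refl[of ?B] c1 B unfolding Sol_def by auto
  next
    case i4
    have B: "?B = HT (3*r+2) r (r+1) (r+1)" using i4 by (simp add: ed_def ea_def eb_def ec_def)
    have c1: "congr ?B (HT (3*r+2) (r+1) r (r+1))" unfolding B by (rule congr_rot') auto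
    have c2: "congr ?B (HT (3*r+2) (r+1) (r+1) r)" using c1 by (rule congr_trans) (rule congr_rot', auto)
    show ?thesis using assms(2) i4 congr_refl[of ?B] c1 c2 B unfolding Sol_def by auto
  next
    case i5
    have B: "?B = HT (3*r+2) r r (r+1)" using i5 by (simp add: ed_def ea_def eb_def ec_def)
    have c1: "congr ?B (HT (3*r+2) (r+1) r r)" unfolding B by (rule congr_rot') auto
    have c2: "congr ?B (HT (3*r+2) r (r+1) r)" using c1 by (rule congr_trans) (rule congr_rot', auto)
    have c3: "congr ?B (HT (3*r+3) (r+1) (r+1) (r+2))" unfolding B by (rule congr_dual') auto
    have c4: "congr ?B (HT (3*r+3) (r+2) (r+1) (r+1))" using c3 by (rule congr_trans) (rule congr_rot', auto)
    have c5: "congr ?B (HT (3*r+3) (r+1) (r+2) (r+1))" using c4 by (rule congr_trans) (rule congr_rot', auto)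
    show ?thesis using assms(2) i5 congr_refl[of ?B] c1 c2 c3 c4 c5 B unfolding Sol_def by auto
  qed
qed


lemma EB_facts:
  fixes r :: int and i :: nat
  assumes "r \<ge> 1" "i < 6"
  defines "d \<equiv> ed i r" and "a \<equiv> ea i r" and "b \<equiv> eb i r" and "c \<equiv> ec i r"
  shows "0 \<le> a \<and> 0 \<le> b \<and> 0 \<le> c \<and> a + b \<le> d \<and> a + c \<le> d \<and> b + c \<le> d \<and>
         1 \<le> d - a \<and> 1 \<le> d - b \<and> 1 \<le> d - c \<and> 3*d-a-b-c = 6*r + int i \<and>
         d*d-a*a-b*b-c*c = Am i r"
proof -
  have iv: "i=0 \<or> i=1 \<or> i=2 \<or> i=3 \<or> i=4 \<or> i=5" using assms by auto
  then show ?thesis using assms(1) unfolding d_def a_def b_def c_def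
    by (elim disjE) (simp_all add: ed_def ea_def eb_def ec_def Am_def algebra_simps)
qed

lemma main_bound:
  fixes r :: int and i :: nat
  assumes r: "r \<ge> 1" and i: "i < 6" and P: "polyiamond P"
    and sP: "int (site_perimeter P) \<le> 6*r + int i"
  shows "int (area P) \<le> Am i r \<and>
    (int (area P) = Am i r \<longrightarrow> int (site_perimeter P) = 6*r + int i \<and>
       (\<exists>f. lattice_sym f \<and> P = sym_image f (enc ` HT (ed i r) (ea i r) (eb i r) (ec i r))))"
proof -
  obtain Q where Q: "P = enc ` Q" "finite Q" "Q \<noteq> {}" "connT Q" using polyiamond_as_enc[OF P] by blast
  define X0 where "X0 = x0 Q"
  define X1 where "X1 = x1 Q"
  define Y0 where "Y0 = y0 Q"
  define Y1 where "Y1 = y1 Q"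
  define Z0 where "Z0 = z0 Q"
  define Z1 where "Z1 = z1 Q"
  have lb: "(X1 - X0 + 1) + (Y1 - Y0 + 1) + (Z1 - Z0 + 1) \<le> int (site_perimeter P)"
    using lower_bound[OF Q(2,3,4)] Q(1) site_enc by (simp add: X0_def X1_def Y0_def Y1_def Z0_def Z1_def)
  have fk: "finite (k ` Q)" "k ` Q \<noteq> {}" for k :: "tri \<Rightarrow> int" using Q by auto
  have bnd: "X0 \<le> kx u \<and> kx u \<le> X1 \<and> Y0 \<le> ky u \<and> ky u \<le> Y1 \<and> Z0 \<le> kz u \<and> kz u \<le> Z1" if "u \<in> Q" for u
    using that fk unfolding X0_def X1_def Y0_def Y1_def Z0_def Z1_def x0_def x1_def y0_def y1_def z0_def z1_def
    by (auto intro!: Min_le Max_ge)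
  have ex: "\<exists>u\<in>Q. k u = Min (k ` Q)" "\<exists>u\<in>Q. k u = Max (k ` Q)" for k :: "tri \<Rightarrow> int"
    using Min_in[OF fk(1,2), of k] Max_in[OF fk(1,2), of k] by (auto simp del: Min_in Max_in)
  have kzb: "kx u + ky u \<le> kz u \<and> kz u \<le> kx u + ky u + 1" for u by (simp add: kx_def ky_def kz_def)
  obtain ux0 where ux0: "ux0 \<in> Q" "kx ux0 = X0" using ex(1)[of kx] by (auto simp: X0_def x0_def)
  obtain ux1 where ux1: "ux1 \<in> Q" "kx ux1 = X1" using ex(2)[of kx] by (auto simp: X1_def x1_def)
  obtain uy0 where uy0: "uy0 \<in> Q" "ky uy0 = Y0" using ex(1)[of ky] by (auto simp: Y0_def y0_def)
  obtain uy1 where uy1: "uy1 \<in> Q" "ky uy1 = Y1" using ex(2)[of ky] by (auto simp: Y1_def y1_def)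
  obtain uz0 where uz0: "uz0 \<in> Q" "kz uz0 = Z0" using ex(1)[of kz] by (auto simp: Z0_def z0_def)
  obtain uz1 where uz1: "uz1 \<in> Q" "kz uz1 = Z1" using ex(2)[of kz] by (auto simp: Z1_def z1_def)
  define d where "d = Z1 - X0 - Y0 + 1"
  define a where "a = Z0 - X0 - Y0"
  define b where "b = d - (X1 - X0 + 1)"
  define c where "c = d - (Y1 - Y0 + 1)"
  have t1: "0 \<le> a" using bnd[OF uz0(1)] kzb[of uz0] uz0(2) a_def by linarith
  have t2: "0 \<le> b" using bnd[OF ux1(1)] kzb[of ux1] ux1(2) b_def d_def by linarith
  have t3: "0 \<le> c" using bnd[OF uy1(1)] kzb[of uy1] uy1(2) c_def d_def by linarith
  have t4: "a + b \<le> d" using bnd[OF uy0(1)] kzb[of uy0] uy0(2) a_def b_def d_def by linarith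
  have t5: "a + c \<le> d" using bnd[OF ux0(1)] kzb[of ux0] ux0(2) a_def c_def d_def by linarith
  have t6: "b + c \<le> d" using bnd[OF uz1(1)] kzb[of uz1] uz1(2) b_def c_def d_def by linarith
  have Hq: "Hreg X0 X1 Y0 Y1 Z0 Z1 = g_tr X0 Y0 ` HT d a b c"
    using g_tr_HT[of X0 Y0 d a b c] by (simp add: a_def b_def c_def d_def algebra_simps)
  have injg: "inj (g_tr X0 Y0)" by (auto simp: inj_on_def g_tr_def)
  have cH: "int (card (Hreg X0 X1 Y0 Y1 Z0 Z1)) = d*d-a*a-b*b-c*c"
    unfolding Hq using card_HT[OF t1 t2 t3 t4 t5 t6] card_image[OF inj_on_subset[OF injg subset_UNIV]] by simp
  have sub: "Q \<subseteq> Hreg X0 X1 Y0 Y1 Z0 Z1" using bnd by (auto simp: Hreg_def)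
  have cQ: "card Q \<le> card (Hreg X0 X1 Y0 Y1 Z0 Z1)" using sub finite_Hreg by (rule card_mono[rotated])
  have w: "3*d-a-b-c = (X1 - X0 + 1) + (Y1 - Y0 + 1) + (Z1 - Z0 + 1)" by (simp add: a_def b_def c_def d_def)
  have wpos: "0 \<le> 3*d-a-b-c" using w bnd[OF uz0(1)] by linarith
  have ws: "3*d-a-b-c \<le> 6*r + int i" using w lb sP by linarith
  note hb = hex_bound[OF r i wpos ws]
  have areaP: "int (area P) = int (card Q)" using Q(1) area_enc by simp
  show ?thesis
  proof (intro conjI impI)
    show "int (area P) \<le> Am i r" using hb cQ cH areaP by linarith
  next
    assume eq: "int (area P) = Am i r"
    then have e2: "d*d-a*a-b*b-c*c = Am i r" using hb cQ cH areaP by linarith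
    then have W: "3*d-a-b-c = 6*r + int i" and S: "Sol i r d a b c" using hb by auto
    show "int (site_perimeter P) = 6*r + int i" using W w lb sP by linarith
    have "card Q = card (Hreg X0 X1 Y0 Y1 Z0 Z1)" using eq e2 cQ cH areaP by linarith
    then have QH: "Q = Hreg X0 X1 Y0 Y1 Z0 Z1" using card_subset_eq[OF finite_Hreg sub] by simp
    have "congr (HT d a b c) (Hreg X0 (X0+d-b-1) Y0 (Y0+d-c-1) (a+X0+Y0) (d-1+X0+Y0))" by (rule congr_tr)
    moreover have "Hreg X0 (X0+d-b-1) Y0 (Y0+d-c-1) (a+X0+Y0) (d-1+X0+Y0) = Q"
      unfolding QH by (simp add: a_def b_def c_def d_def algebra_simps)
    ultimately have "congr (HT d a b c) Q" by simp
    then have "congr (HT (ed i r) (ea i r) (eb i r) (ec i r)) Q" using congr_sol[OF r S] congr_trans by blast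
    then show "\<exists>f. lattice_sym f \<and> P = sym_image f (enc ` HT (ed i r) (ea i r) (eb i r) (ec i r))"
      unfolding congr_def Q(1) by blast
  qed
qed


theorem proposition7p2:
  fixes r i :: nat
  assumes "r \<ge> 1" and "i < 6"
  shows "polyiamond (EB i r) \<and> site_perimeter (EB i r) = 6*r + i
         \<and> (\<forall>P. polyiamond P \<and> site_perimeter P = 6*r + i \<longrightarrow> area P \<le> area (EB i r))
         \<and> (\<forall>P. polyiamond P \<and> site_perimeter P = 6*r + i \<and> area P = area (EB i r) \<longrightarrow>
              P \<in> quasi_regular_hexagons \<and> (\<exists>f. lattice_sym f \<and> P = sym_image f (EB i r)))"
proof -
  define R where "R = int r"
  have R1: "R \<ge> 1" using assms(1) R_def by simp
  define d where "d = ed i R"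
  define a where "a = ea i R"
  define b where "b = eb i R"
  define c where "c = ec i R"
  have EBe: "EB i r = enc ` HT d a b c" using EB_HT[OF assms] by (simp add: R_def d_def a_def b_def c_def)
  have F: "0 \<le> a" "0 \<le> b" "0 \<le> c" "a + b \<le> d" "a + c \<le> d" "b + c \<le> d"
         "1 \<le> d - a" "1 \<le> d - b" "1 \<le> d - c" "3*d-a-b-c = 6*R + int i"
         "d*d-a*a-b*b-c*c = Am i R"
    using EB_facts[OF R1 assms(2)] unfolding d_def a_def b_def c_def by auto
  have cardHT: "int (card (HT d a b c)) = Am i R" using card_HT[OF F(1-6)] F(11) by simp
  have Ampos: "Am i R > 0"
  proof -
    have "1*1 \<le> R*R" using R1 by (intro mult_mono) auto
    then have "6 \<le> 6*R*R" by simp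
    moreover have "0 \<le> 2*int i*R" using R1 by simp
    moreover have "Am i R \<ge> 6*R*R + 2*int i*R - 1" unfolding Am_def by simp
    ultimately show ?thesis by linarith
  qed
  have areaEB: "int (area (EB i r)) = Am i R" unfolding EBe area_enc using cardHT .
  have ne: "HT d a b c \<noteq> {}" using cardHT Ampos by auto
  have fin: "finite (HT d a b c)" by (simp add: HT_def finite_Hreg)
  have polyEB: "polyiamond (EB i r)" unfolding EBe polyiamond_enc_iff
    using fin ne HT_conn[OF F(1-9)] by simp
  have "int (card (NT (HT d a b c))) \<le> max 0 (d-b-1 - 0 + 1) + max 0 (d-c-1 - 0 + 1) + max 0 (d-1 - a + 1)"
    unfolding HT_def by (rule NT_upper)
  then have sEB: "int (site_perimeter (EB i r)) \<le> 6*R + int i"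
    unfolding EBe site_enc using F by simp
  note mbEB = main_bound[OF R1 assms(2) polyEB sEB]
  have sEq: "site_perimeter (EB i r) = 6*r + i" using mbEB areaEB R_def by simp
  show ?thesis
  proof (intro conjI allI impI)
    show "polyiamond (EB i r)" by (rule polyEB)
    show "site_perimeter (EB i r) = 6*r + i" by (rule sEq)
  next
    fix P assume h: "polyiamond P \<and> site_perimeter P = 6*r + i"
    have "int (site_perimeter P) \<le> 6*R + int i" using h R_def by simp
    then have "int (area P) \<le> Am i R" using main_bound[OF R1 assms(2)] h by blast
    then show "area P \<le> area (EB i r)" using areaEB by simp
  next
    fix P assume h: "polyiamond P \<and> site_perimeter P = 6*r + i \<and> area P = area (EB i r)"
    have "int (site_perimeter P) \<le> 6*R + int i" using h R_def by simp
    moreover have "int (area P) = Am i R" using h areaEB by simp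
    ultimately have "\<exists>f. lattice_sym f \<and> P = sym_image f (enc ` HT (ed i R) (ea i R) (eb i R) (ec i R))"
      using main_bound[OF R1 assms(2)] h by blast
    then show ex: "\<exists>f. lattice_sym f \<and> P = sym_image f (EB i r)"
      using EBe by (simp add: d_def a_def b_def c_def)
    then show "P \<in> quasi_regular_hexagons"
      unfolding quasi_regular_hexagons_def using assms by blast
  qed
qed


end
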